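(* Let $k\ge0$ and $l\ge1$. Then $$H^{(k)}=\sum_{\substack{0<n<b^{l-1}\\ k(n)=k}}\frac1n+b\sum_{\substack{b^{l-1}\le n<b^l\\ k(n)\le k}}\frac1n+\sum_{m=1}^\infty(-1)^m\sum_{\substack{b^{l-1}\le n<b^l\\ k(n)\le k}}\frac{u_{k-k(n);m}}{n^{m+1}},$$ and also $$H^{(k)}=\sum_{\substack{0<n<b^{l-1}\\ k(n)=k}}\frac1n+b\sum_{\substack{b^{l-1}\le n<b^l\\ k(n)\le k}}\frac1{n+1}+\sum_{m=1}^\infty\sum_{\substack{b^{l-1}\le n<b^l\\ k(n)\le k}}\frac{v_{k-k(n);m}}{(n+1)^{m+1}}.$$
   Context: Fix $b\ge2$ and $d\in\{0,\dots,b-1\}$. For an integer $n\ge0$, $k(n)$ is the number of occurrences of $d$ in its base-$b$ representation without leading zeros, and $H^{(k)}=\sum_{n\ge1,\ k(n)=k}1/n$. A string is a finite sequence $X=(d_l,\dots,d_1)$ of digits in $\{0,\dots,b-1\}$ (leading zeros allowed), of length $|X|=l\ge0$; its value is $n(X)=\sum_{i=1}^{l}d_ib^{i-1}$ ($0$ for the empty string). For $k\ge0$, $\mu_k=\sum_{X}b^{-|X|}\delta_{n(X)/b^{|X|}}$, the sum over all strings $X$ containing $d$ exactly $k$ times; it is a finite measure on $[0,1)$ of total mass $b$. Moments: $u_{k;m}=\int_{[0,1)}x^m\,d\mu_k(x)$ and $v_{k;m}=\int_{[0,1)}(1-x)^m\,d\mu_k(x)$ (with $0^0=1$). *)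

theory Defs
  imports "HOL-Analysis.Analysis"
begin

(* k(n): number of occurrences of digit d in the base-b representation of n
   without leading zeros (n = 0 has the empty representation). *)
function dcount :: "nat \<Rightarrow> nat \<Rightarrow> nat \<Rightarrow> nat" where
  "dcount b d n = (if n = 0 \<or> b < 2 then 0
                   else (if n mod b = d then 1 else 0) + dcount b d (n div b))"
  by auto
termination by (relation "Wellfounded.measure (\<lambda>(b,d,n). n)") auto

declare dcount.simps[simp del]

definition Hk :: "nat \<Rightarrow> nat \<Rightarrow> nat \<Rightarrow> real" where
  "Hk b d k = infsum (\<lambda>n. 1 / real n) {n. 0 < n \<and> dcount b d n = k}"

(* value of a string X = [d_l, ..., d_1] (written order, leading zeros allowed) *)
definition strval :: "nat \<Rightarrow> nat list \<Rightarrow> nat" where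
  "strval b X = foldl (\<lambda>a x. a * b + x) 0 X"

definition strs :: "nat \<Rightarrow> nat \<Rightarrow> nat \<Rightarrow> nat list set" where
  "strs b d k = {X. set X \<subseteq> {..<b} \<and> count_list X d = k}"

(* moments u_{k;m} and v_{k;m}: integrals against mu_k, i.e. the countable sums
   sum_X b^{-|X|} x_X^m and sum_X b^{-|X|} (1 - x_X)^m, with x_X = n(X)/b^{|X|}
   (0^0 = 1) *)
definition umom :: "nat \<Rightarrow> nat \<Rightarrow> nat \<Rightarrow> nat \<Rightarrow> real" where
  "umom b d k m = infsum (\<lambda>X. (1 / real b) ^ length X *
       (real (strval b X) / real b ^ length X) ^ m) (strs b d k)"

definition vmom :: "nat \<Rightarrow> nat \<Rightarrow> nat \<Rightarrow> nat \<Rightarrow> real" where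
  "vmom b d k m = infsum (\<lambda>X. (1 / real b) ^ length X *
       (1 - real (strval b X) / real b ^ length X) ^ m) (strs b d k)"

end

theory Submission
  imports Defs
begin


lemma strval_Nil[simp]: "strval b [] = 0" by (simp add: strval_def)
lemma strval_snoc[simp]: "strval b (X @ [c]) = strval b X * b + c"
  by (simp add: strval_def)

lemma strval_lt: "set X \<subseteq> {..<b} \<Longrightarrow> strval b X < b ^ length X"
proof (induction X rule: rev_induct)
  case Nil then show ?case by simp
next
  case (snoc c X)
  then have h: "strval b X + 1 \<le> b ^ length X" "c < b" by auto
  have "strval b X * b + c < (strval b X + 1) * b" using h by simp
  also have "\<dots> \<le> b ^ length X * b" using h by (intro mult_right_mono) auto
  finally show ?case by (simp add: mult.commute)
qed

lemma dcount_step: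
  assumes "b \<ge> 2" "n > 0" "c < b"
  shows "dcount b d (n * b + c) = (if c = d then 1 else 0) + dcount b d n"
proof -
  have "(n * b + c) mod b = c" "(n * b + c) div b = n" using assms by auto
  moreover have "n * b + c \<noteq> 0" using assms by auto
  ultimately show ?thesis using assms by (subst dcount.simps) simp
qed

lemma dcount_app:
  assumes "b \<ge> 2" "m > 0" "set X \<subseteq> {..<b}"
  shows "dcount b d (m * b ^ length X + strval b X) = dcount b d m + count_list X d"
  using assms(3)
proof (induction X rule: rev_induct)
  case Nil then show ?case by simp
next
  case (snoc c X)
  have e: "m * b ^ length (X @ [c]) + strval b (X @ [c]) = (m * b ^ length X + strval b X) * b + c"
    by (simp add: algebra_simps)
  have p: "m * b ^ length X + strval b X > 0" using assms by simp
  show ?case using snoc dcount_step[OF assms(1) p, of c d] by (simp only: e) auto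
qed

lemma strval_inj:
  assumes "set X \<subseteq> {..<b}" "set Y \<subseteq> {..<b}" "length X = length Y" "strval b X = strval b Y"
  shows "X = Y"
  using assms
proof (induction X arbitrary: Y rule: rev_induct)
  case Nil then show ?case by simp
next
  case (snoc c X)
  obtain Y' c' where Y: "Y = Y' @ [c']" using snoc.prems(3)
    by (metis length_0_conv rev_exhaust snoc_eq_iff_butlast) 
  have cc: "c < b" "c' < b" using snoc.prems Y by auto
  have eq: "strval b X * b + c = strval b Y' * b + c'" using snoc.prems Y by simp
  have "c = c'" using arg_cong[OF eq, of "\<lambda>t. t mod b"] cc by simp
  moreover have "strval b X = strval b Y'" using arg_cong[OF eq, of "\<lambda>t. t div b"] cc by simp
  ultimately show ?case using snoc Y by auto
qed

lemma decomp_exists: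
  assumes "b \<ge> 2" "b ^ L \<le> n"
  shows "\<exists>m X. b ^ L \<le> m \<and> m < b ^ Suc L \<and> set X \<subseteq> {..<b} \<and> n = m * b ^ length X + strval b X"
  using assms(2)
proof (induction n rule: less_induct)
  case (less n)
  show ?case
  proof (cases "n < b ^ Suc L")
    case True
    then show ?thesis using less.prems by (intro exI[of _ n] exI[of _ "[]"]) auto
  next
    case False
    have "b ^ L \<le> n div b" using False assms(1)
      by (metis div_le_mono nonzero_mult_div_cancel_right not_less power_Suc2 zero_neq_numeral le_zero_eq) 
    moreover have "n div b < n" using assms(1) less.prems
      by (metis div_less_dividend le_zero_eq less_le_trans nat_less_le one_less_numeral_iff power_not_zero semiring_norm(76) zero_neq_numeral not_less)
    ultimately obtain m X where mX: "b ^ L \<le> m" "m < b ^ Suc L" "set X \<subseteq> {..<b}"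
      "n div b = m * b ^ length X + strval b X" using less.IH by blast
    have "n = (n div b) * b + n mod b" by simp
    also have "\<dots> = m * b ^ length (X @ [n mod b]) + strval b (X @ [n mod b])"
      using mX by (simp add: algebra_simps)
    finally show ?thesis using mX assms(1)
      by (intro exI[of _ m] exI[of _ "X @ [n mod b]"]) auto
  qed
qed

lemma decomp_inj:
  assumes "b \<ge> 2" "b ^ L \<le> m" "m < b ^ Suc L" "set X \<subseteq> {..<b}"
    "b ^ L \<le> m'" "m' < b ^ Suc L" "set X' \<subseteq> {..<b}"
    "m * b ^ length X + strval b X = m' * b ^ length X' + strval b X'"
  shows "m = m' \<and> X = X'"
proof -
  have bnd: "b ^ (L + length Y) \<le> p * b ^ length Y + strval b Y \<and> p * b ^ length Y + strval b Y < b ^ (Suc L + length Y)"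
    if "b ^ L \<le> p" "p < b ^ Suc L" "set Y \<subseteq> {..<b}" for p Y
  proof
    show "b ^ (L + length Y) \<le> p * b ^ length Y + strval b Y"
      using that by (simp add: power_add trans_le_add1 mult_right_mono)
    have "p * b ^ length Y + strval b Y < p * b ^ length Y + b ^ length Y"
      using strval_lt[OF that(3)] by simp
    also have "\<dots> = (p + 1) * b ^ length Y" by simp
    also have "\<dots> \<le> b ^ Suc L * b ^ length Y" using that by (intro mult_right_mono) auto
    finally show "p * b ^ length Y + strval b Y < b ^ (Suc L + length Y)" by (simp add: power_add)
  qed
  have b1: "1 < b" using assms by simp
  have "length X = length X'"
  proof (rule ccontr)
    assume "length X \<noteq> length X'"
    then consider "length X < length X'" | "length X' < length X" by linarith
    then show False
    proof cases
      case 1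
      have "b ^ (Suc L + length X) \<le> b ^ (L + length X')"
        using 1 b1 by (intro power_increasing) auto
      then show False using bnd[OF assms(2-4)] bnd[OF assms(5-7)] assms(8) by linarith
    next
      case 2
      have "b ^ (Suc L + length X') \<le> b ^ (L + length X)"
        using 2 b1 by (intro power_increasing) auto
      then show False using bnd[OF assms(2-4)] bnd[OF assms(5-7)] assms(8) by linarith
    qed
  qed
  moreover
  have dv: "(p * b ^ length Y + strval b Y) div b ^ length Y = p"
      "(p * b ^ length Y + strval b Y) mod b ^ length Y = strval b Y" if "set Y \<subseteq> {..<b}" for p Y
  proof -
    have l: "strval b Y < b ^ length Y" using strval_lt[OF that] .
    then have "b ^ length Y \<noteq> 0" by (metis not_less0 power_0 zero_less_power gr0I)
    then show "(p * b ^ length Y + strval b Y) div b ^ length Y = p"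
      "(p * b ^ length Y + strval b Y) mod b ^ length Y = strval b Y"
      using l by (simp_all add: add.commute)
  qed
  ultimately have "m = m'" "strval b X = strval b X'"
    using dv[OF assms(4), of m] dv[OF assms(7), of m'] assms(8) by metis+
  then show ?thesis using strval_inj[OF assms(4,7)] \<open>length X = length X'\<close> by auto
qed



definition wt :: "nat \<Rightarrow> nat list \<Rightarrow> real" where
  "wt b X = (1 / real b) ^ length X"

lemma strs_split:
  "strs b d k \<inter> {X. P (length X)} = {X. X = [] \<and> k = 0 \<and> P 0} \<union>
    (\<Union>c\<in>{..<b}. Cons c ` {X. set X \<subseteq> {..<b} \<and> count_list X d + (if c = d then 1 else 0) = k \<and> P (Suc (length X))})"
  (is "?L = ?R")
proof
  show "?L \<subseteq> ?R"
  proof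
    fix X assume X: "X \<in> ?L"
    show "X \<in> ?R"
    proof (cases X)
      case Nil then show ?thesis using X by (auto simp: strs_def)
    next
      case (Cons c Y)
      then have "Y \<in> {X. set X \<subseteq> {..<b} \<and> count_list X d + (if c = d then 1 else 0) = k \<and> P (Suc (length X))}"
        using X by (auto simp: strs_def)
      then have "X \<in> Cons c ` {X. set X \<subseteq> {..<b} \<and> count_list X d + (if c = d then 1 else 0) = k \<and> P (Suc (length X))}"
        using Cons by blast
      moreover have "c < b" using X Cons by (auto simp: strs_def)
      ultimately show ?thesis by blast
    qed
  qed
  show "?R \<subseteq> ?L" by (auto simp: strs_def)
qed

lemma strs_step:
  assumes b2: "b \<ge> 2" "d < b"
  and h1: "(wt b has_sum s1) (strs b d k \<inter> {X. Q (length X)})"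
  and h2: "k > 0 \<Longrightarrow> (wt b has_sum s2) (strs b d (k-1) \<inter> {X. Q (length X)})"
  and PQ: "\<And>n. P (Suc n) = Q n"
  shows "(wt b has_sum ((if k=0 \<and> P 0 then 1 else 0) + (real b - 1) / b * s1 + (if k>0 then s2 / b else 0)))
           (strs b d k \<inter> {X. P (length X)})"
proof -
  define I where "I c = {X. set X \<subseteq> {..<b} \<and> count_list X d + (if c = d then 1 else 0) = k \<and> P (Suc (length X))}" for c
  define t where "t c = (if c = d then (if k > 0 then s2 else 0) else s1)" for c
  have It: "(wt b has_sum t c) (I c)" for c
  proof (cases "c = d")
    case True
    show ?thesis
    proof (cases "k > 0")
      case True
      then have "I c = strs b d (k-1) \<inter> {X. Q (length X)}"
        using \<open>c = d\<close> by (auto simp: I_def strs_def PQ)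
      then show ?thesis using h2 True \<open>c = d\<close> by (simp add: t_def)
    next
      case False
      then have "I c = {}" using \<open>c = d\<close> by (auto simp: I_def)
      then show ?thesis using False \<open>c = d\<close> by (simp add: t_def)
    qed
  next
    case False
    then have "I c = strs b d k \<inter> {X. Q (length X)}"
      by (auto simp: I_def strs_def PQ)
    then show ?thesis using h1 False by (simp add: t_def)
  qed
  have Ic: "(wt b has_sum (t c / b)) (Cons c ` I c)" for c
  proof -
    have "((\<lambda>X. wt b X * (1 / b)) has_sum (t c * (1 / b))) (I c)"
      by (rule has_sum_cmult_left[OF It])
    then have "((wt b \<circ> Cons c) has_sum (t c / b)) (I c)"
      by (simp add: wt_def comp_def)
    then show ?thesis by (subst has_sum_reindex) auto
  qed
  have U: "(wt b has_sum (\<Sum>c<b. t c / b)) (\<Union>c\<in>{..<b}. Cons c ` I c)"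
    by (rule sum_has_sum) (use Ic in auto)
  have sumt: "(\<Sum>c<b. t c / b) = (real b - 1) / b * s1 + (if k>0 then s2 / b else 0)"
  proof -
    have "(\<Sum>c<b. t c / b) = t d / b + (\<Sum>c\<in>{..<b} - {d}. t c / b)"
      using b2 by (subst sum.remove[of _ d]) auto
    also have "(\<Sum>c\<in>{..<b} - {d}. t c / b) = (\<Sum>c\<in>{..<b} - {d}. s1 / b)"
      by (rule sum.cong) (auto simp: t_def)
    also have "\<dots> = (real b - 1) * (s1 / b)" using b2 by (simp add: of_nat_diff)
    finally show ?thesis by (simp add: t_def)
  qed
  have E: "(wt b has_sum (if k=0 \<and> P 0 then 1 else 0)) {X. X = [] \<and> k = 0 \<and> P 0}"
  proof (cases "k = 0 \<and> P 0")
    case True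
    then have "{X. X = [] \<and> k = 0 \<and> P 0} = {[]}" by auto
    then show ?thesis using True by (simp add: wt_def has_sum_finiteI)
  next
    case False
    have e: "{X. X = [] \<and> k = 0 \<and> P 0} = {}" using False by auto
    have z: "(if k=0 \<and> P 0 then 1 else (0::real)) = 0" using False by simp
    show ?thesis unfolding e z by simp
  qed
  have "(wt b has_sum ((if k=0 \<and> P 0 then 1 else 0) + (\<Sum>c<b. t c / b)))
      ({X. X = [] \<and> k = 0 \<and> P 0} \<union> (\<Union>c\<in>{..<b}. Cons c ` I c))"
    by (rule has_sum_Un_disjoint[OF E U]) auto
  then show ?thesis
    unfolding strs_split[of b d k P] I_def[symmetric] sumt by (simp add: add.assoc)
qed

lemma strs_finite_bound:
  assumes b2: "b \<ge> 2" "d < b"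
  shows "\<exists>s \<le> real b. (wt b has_sum s) (strs b d k \<inter> {X. length X \<le> N})"
proof (induction N arbitrary: k)
  case 0
  show ?case
  proof (cases "k = 0")
    case True
    then have e: "strs b d k \<inter> {X. length X \<le> 0} = {[]}" by (auto simp: strs_def)
    have "(wt b has_sum 1) {[]}" by (rule has_sum_finiteI) (auto simp: wt_def)
    moreover have "(1::real) \<le> real b" using b2 by simp
    ultimately show ?thesis unfolding e by blast
  next
    case False
    then have e: "strs b d k \<inter> {X. length X \<le> 0} = {}" by (auto simp: strs_def)
    have "(wt b has_sum 0) {}" by simp
    moreover have "(0::real) \<le> real b" using b2 by simp
    ultimately show ?thesis unfolding e by blast
  qed
next
  case (Suc N)
  obtain s1 where s1: "s1 \<le> real b" "(wt b has_sum s1) (strs b d k \<inter> {X. length X \<le> N})"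
    using Suc by blast
  obtain s2 where s2: "s2 \<le> real b" "(wt b has_sum s2) (strs b d (k-1) \<inter> {X. length X \<le> N})"
    using Suc by blast
  have H: "(wt b has_sum ((if k=0 \<and> 0 \<le> Suc N then 1 else 0) + (real b - 1) / b * s1 + (if k>0 then s2 / b else 0)))
           (strs b d k \<inter> {X. length X \<le> Suc N})"
    by (rule strs_step[OF b2 s1(2) s2(2), where P="\<lambda>n. n \<le> Suc N"]) auto
  have bp: "real b > 0" using b2 by simp
  have "(real b - 1) / b * s1 \<le> (real b - 1) / b * b"
    using s1 b2 by (intro mult_left_mono) auto
  moreover have "s2 / b \<le> 1" using s2 bp by simp
  moreover have "(real b - 1) / b * b = real b - 1" using bp by simp
  ultimately have A: "(real b - 1) / b * s1 \<le> real b - 1" by linarith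
  have "(if k=0 \<and> 0 \<le> Suc N then 1 else 0) + (real b - 1) / b * s1 + (if k>0 then s2 / b else 0) \<le> real b"
    using A \<open>s2 / b \<le> 1\<close> by (cases "k = 0") auto
  then show ?case using H by blast
qed

lemma wt_summable:
  assumes b2: "b \<ge> 2" "d < b"
  shows "wt b summable_on strs b d k"
proof (rule nonneg_bdd_above_summable_on)
  show "\<And>x. x \<in> strs b d k \<Longrightarrow> 0 \<le> wt b x" by (simp add: wt_def)
  show "bdd_above (sum (wt b) ` {F. F \<subseteq> strs b d k \<and> finite F})"
  proof (rule bdd_aboveI)
    fix y assume "y \<in> sum (wt b) ` {F. F \<subseteq> strs b d k \<and> finite F}"
    then obtain F where F: "F \<subseteq> strs b d k" "finite F" "y = sum (wt b) F" by auto
    define N where "N = Max (length ` F)"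
    have FN: "F \<subseteq> strs b d k \<inter> {X. length X \<le> N}"
      using F by (auto simp: N_def)
    obtain s where s: "s \<le> real b" "(wt b has_sum s) (strs b d k \<inter> {X. length X \<le> N})"
      using strs_finite_bound[OF b2] by blast
    have "sum (wt b) F \<le> s"
      by (rule finite_sum_le_has_sum[OF s(2) F(2)]) (use FN in \<open>auto simp: wt_def\<close>)
    then show "y \<le> real b" using s F by simp
  qed
qed

lemma wt_has_sum:
  assumes b2: "b \<ge> 2" "d < b"
  shows "(wt b has_sum real b) (strs b d k)"
proof (induction k)
  case 0
  have S: "(wt b has_sum infsum (wt b) (strs b d 0)) (strs b d 0 \<inter> {X. True})"
    using wt_summable[OF b2, of 0] by simp
  have H2: "0 > (0::nat) \<Longrightarrow> (wt b has_sum 0) (strs b d (0-1) \<inter> {X. True})" by simp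
  have "(wt b has_sum (1 + (real b - 1) / b * infsum (wt b) (strs b d 0))) (strs b d 0 \<inter> {X. True})"
    using strs_step[OF b2 S H2, of "\<lambda>_. True"] by simp
  then have "infsum (wt b) (strs b d 0) = 1 + (real b - 1) / b * infsum (wt b) (strs b d 0)"
    using S has_sum_unique by blast
  moreover have "(real b - 1) / b * infsum (wt b) (strs b d 0) = infsum (wt b) (strs b d 0) - infsum (wt b) (strs b d 0) / b"
    using b2 by (simp add: divide_simps algebra_simps)
  ultimately have "infsum (wt b) (strs b d 0) / b = 1" by linarith
  then have "infsum (wt b) (strs b d 0) = b" using b2 by (simp add: divide_eq_1_iff)
  then show ?case using S by simp
next
  case (Suc k)
  have S: "(wt b has_sum infsum (wt b) (strs b d (Suc k))) (strs b d (Suc k) \<inter> {X. True})"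
    using wt_summable[OF b2, of "Suc k"] by simp
  have H2: "Suc k > 0 \<Longrightarrow> (wt b has_sum b) (strs b d (Suc k - 1) \<inter> {X. True})" using Suc by simp
  have "(wt b has_sum (0 + (real b - 1) / b * infsum (wt b) (strs b d (Suc k)) + b / b)) (strs b d (Suc k) \<inter> {X. True})"
    using strs_step[OF b2 S H2, of "\<lambda>_. True"] by simp
  then have "infsum (wt b) (strs b d (Suc k)) = 0 + (real b - 1) / b * infsum (wt b) (strs b d (Suc k)) + b / b"
    using S has_sum_unique by blast
  moreover have "real b / b = 1" using b2 by simp
  ultimately have "infsum (wt b) (strs b d (Suc k)) = (real b - 1) / b * infsum (wt b) (strs b d (Suc k)) + 1"
    by simp
  moreover have "(real b - 1) / b * infsum (wt b) (strs b d (Suc k)) = infsum (wt b) (strs b d (Suc k)) - infsum (wt b) (strs b d (Suc k)) / b"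
    using b2 by (simp add: divide_simps algebra_simps)
  ultimately have "infsum (wt b) (strs b d (Suc k)) / b = 1" by linarith
  then have "infsum (wt b) (strs b d (Suc k)) = b" using b2 by (simp add: divide_eq_1_iff)
  then show ?case using S by simp
qed



lemma geom_part:
  fixes a r :: real
  assumes "a \<noteq> 0" "a \<noteq> r"
  shows "(\<Sum>i<N. r ^ i / a ^ Suc i) = (1 - (r / a) ^ N) / (a - r)"
proof (induction N)
  case 0 then show ?case by simp
next
  case (Suc N)
  have ar: "a - r \<noteq> 0" using assms by simp
  have "(1 - (r / a) ^ N) / (a - r) + r ^ N / a ^ Suc N = (1 - (r / a) ^ Suc N) / (a - r)"
  proof -
    have "(r / a) ^ N - (r / a) ^ Suc N = (r / a) ^ N * ((a - r) / a)"
      using assms by (simp add: field_simps)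
    also have "\<dots> = r ^ N / a ^ Suc N * (a - r)"
      using assms by (simp add: power_divide)
    finally have D: "(r / a) ^ N - (r / a) ^ Suc N = r ^ N / a ^ Suc N * (a - r)" .
    have "(1 - (r / a) ^ N) / (a - r) + r ^ N / a ^ Suc N
        = (1 - (r / a) ^ N) / (a - r) + ((r / a) ^ N - (r / a) ^ Suc N) / (a - r)"
      unfolding D using ar by simp
    also have "\<dots> = ((1 - (r / a) ^ N) + ((r / a) ^ N - (r / a) ^ Suc N)) / (a - r)"
      by (simp only: add_divide_distrib[symmetric])
    finally show ?thesis by simp
  qed
  then show ?case using Suc by simp
qed

lemma div_le_self_real: "0 \<le> x \<Longrightarrow> 1 \<le> y \<Longrightarrow> x / y \<le> (x::real)"
  using divide_left_mono[of 1 y x] by simp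

lemma has_sum_diff_real:
  fixes f g :: "'a \<Rightarrow> real"
  assumes "(f has_sum a) A" "(g has_sum b) A"
  shows "((\<lambda>x. f x - g x) has_sum (a - b)) A"
proof -
  have "((\<lambda>x. - g x) has_sum (- b)) A" using assms(2) by (simp add: has_sum_uminus)
  from has_sum_add[OF assms(1) this] show ?thesis by simp
qed

lemma has_sum_sum_fin:
  fixes f :: "'i \<Rightarrow> 'a \<Rightarrow> real"
  assumes "finite I" "\<And>i. i \<in> I \<Longrightarrow> (f i has_sum s i) A"
  shows "((\<lambda>x. \<Sum>i\<in>I. f i x) has_sum (\<Sum>i\<in>I. s i)) A"
  using assms
proof (induction I rule: finite_induct)
  case empty then show ?case by simp
next
  case (insert j I)
  have "((\<lambda>x. f j x + (\<Sum>i\<in>I. f i x)) has_sum (s j + (\<Sum>i\<in>I. s i))) A"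
    by (rule has_sum_add) (use insert in auto)
  then show ?case using insert by simp
qed

lemma tail_zero:
  fixes w z :: "'a \<Rightarrow> real"
  assumes ws: "w summable_on W" and wn: "\<And>X. X \<in> W \<Longrightarrow> 0 \<le> w X"
    and z: "\<And>X. X \<in> W \<Longrightarrow> 0 \<le> z X \<and> z X < 1"
  shows "(\<lambda>N. infsum (\<lambda>X. w X * z X ^ N) W) \<longlonglongrightarrow> 0"
proof (rule LIMSEQ_I)
  fix \<epsilon> :: real assume ep: "0 < \<epsilon>"
  have gle: "0 \<le> w X * z X ^ N \<and> w X * z X ^ N \<le> w X" if "X \<in> W" for X N
  proof -
    have "z X ^ N \<le> 1" using z[OF that] by (simp add: power_le_one)
    then show ?thesis using wn[OF that] z[OF that] by (simp add: mult_left_le)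
  qed
  have sN: "(\<lambda>X. w X * z X ^ N) summable_on B" if "B \<subseteq> W" for N B
    by (rule summable_on_comparison_test[OF summable_on_subset_banach[OF ws that]]) (use gle that in auto)
  obtain F where F: "finite F" "F \<subseteq> W" "dist (sum w F) (infsum w W) \<le> \<epsilon> / 2"
    using infsum_finite_approximation[OF ws, of "\<epsilon>/2"] ep by auto
  have wWF: "w summable_on (W - F)" by (rule summable_on_subset_banach[OF ws]) auto
  have WF: "W = F \<union> (W - F)" using F by auto
  have tw: "infsum w W = sum w F + infsum w (W - F)"
    by (subst WF, subst infsum_Un_disjoint) (use F wWF in auto)
  then have tw2: "infsum w (W - F) \<le> \<epsilon> / 2" using F(3) by (simp add: dist_real_def)
  have lim: "(\<lambda>N. \<Sum>X\<in>F. w X * z X ^ N) \<longlonglongrightarrow> (\<Sum>X\<in>F. w X * 0)"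
    by (intro tendsto_sum tendsto_mult tendsto_const LIMSEQ_power_zero) (use z F in auto)
  then obtain N0 where N0: "\<forall>N\<ge>N0. norm ((\<Sum>X\<in>F. w X * z X ^ N) - 0) < \<epsilon> / 2"
    using LIMSEQ_D[of _ 0 "\<epsilon>/2"] ep by fastforce
  have "norm (infsum (\<lambda>X. w X * z X ^ N) W - 0) < \<epsilon>" if "N \<ge> N0" for N
  proof -
    have e1: "infsum (\<lambda>X. w X * z X ^ N) W = (\<Sum>X\<in>F. w X * z X ^ N) + infsum (\<lambda>X. w X * z X ^ N) (W - F)"
      by (subst WF, subst infsum_Un_disjoint) (use F sN in auto)
    have e2: "infsum (\<lambda>X. w X * z X ^ N) (W - F) \<le> infsum w (W - F)"
      by (rule infsum_mono[OF sN wWF]) (use gle in auto)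
    have e3: "0 \<le> infsum (\<lambda>X. w X * z X ^ N) W"
      by (rule infsum_nonneg) (use gle in auto)
    show ?thesis using e1 e2 e3 tw2 N0 that by auto
  qed
  then show "\<exists>no. \<forall>n\<ge>no. norm (infsum (\<lambda>X. w X * z X ^ n) W - 0) < \<epsilon>" by blast
qed

lemma series_gen:
  fixes w r :: "'a \<Rightarrow> real" and a :: real
  assumes ws: "w summable_on W" and wn: "\<And>X. X \<in> W \<Longrightarrow> 0 \<le> w X"
    and a0: "a > 0" and ar: "\<And>X. X \<in> W \<Longrightarrow> a - r X \<ge> 1"
    and ra: "\<And>X. X \<in> W \<Longrightarrow> \<bar>r X\<bar> < a" and r1: "\<And>X. X \<in> W \<Longrightarrow> \<bar>r X\<bar> \<le> 1"
  shows "(\<lambda>i. infsum (\<lambda>X. w X * r X ^ i) W / a ^ Suc i) sums infsum (\<lambda>X. w X / (a - r X)) W"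
proof -
  define G where "G = infsum (\<lambda>X. w X / (a - r X)) W"
  have Gs: "(\<lambda>X. w X / (a - r X)) summable_on W"
  proof (rule summable_on_comparison_test[OF ws])
    fix X assume X: "X \<in> W"
    show "w X / (a - r X) \<le> w X" using wn[OF X] ar[OF X]
      by (simp add: divide_le_eq mult_le_cancel_left1 order_trans [OF _ mult_left_mono[of 1]])
    show "0 \<le> w X / (a - r X)" using wn[OF X] ar[OF X] by simp
  qed
  have abs_sm: "(\<lambda>X. w X * r X ^ i) summable_on W" for i
  proof (rule abs_summable_summable)
    show "(\<lambda>X. norm (w X * r X ^ i)) summable_on W"
    proof (rule summable_on_comparison_test[OF ws])
      fix X assume X: "X \<in> W"
      have "\<bar>r X\<bar> ^ i \<le> 1" using r1[OF X] by (simp add: power_le_one)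
      then show "norm (w X * r X ^ i) \<le> w X" using wn[OF X]
        by (simp add: abs_mult power_abs mult_left_le)
    qed simp
  qed
  define e where "e N X = w X * (r X / a) ^ N / (a - r X)" for N X
  define t where "t N X = w X * (\<bar>r X\<bar> / a) ^ N" for N X
  have zt: "0 \<le> \<bar>r X\<bar> / a \<and> \<bar>r X\<bar> / a < 1" if "X \<in> W" for X
    using ra[OF that] a0 by simp
  have tle: "0 \<le> t N X \<and> t N X \<le> w X" if "X \<in> W" for X N
  proof -
    have "(\<bar>r X\<bar> / a) ^ N \<le> 1" using zt[OF that] by (simp add: power_le_one)
    then show ?thesis using wn[OF that] zt[OF that] by (simp add: t_def mult_left_le)
  qed
  have ts: "t N summable_on W" for N
    by (rule summable_on_comparison_test[OF ws]) (use tle in auto)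
  have ele: "norm (e N X) \<le> t N X" if "X \<in> W" for N X
  proof -
    have "norm (e N X) = w X * (\<bar>r X\<bar> / a) ^ N / (a - r X)"
      using wn[OF that] ar[OF that] a0 by (simp add: e_def abs_mult power_abs)
    also have "\<dots> \<le> w X * (\<bar>r X\<bar> / a) ^ N"
      using div_le_self_real[of "w X * (\<bar>r X\<bar> / a) ^ N" "a - r X"] wn[OF that] ar[OF that] zt[OF that] by simp
    finally show ?thesis by (simp add: t_def)
  qed
  have eabs: "(\<lambda>X. norm (e N X)) summable_on W" for N
    by (rule summable_on_comparison_test[OF ts]) (use ele in auto)
  have es: "e N summable_on W" for N by (rule abs_summable_summable[OF eabs])
  have part: "(\<Sum>i<N. infsum (\<lambda>X. w X * r X ^ i) W / a ^ Suc i) = G - infsum (e N) W" for N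
  proof -
    have h: "((\<lambda>X. \<Sum>i<N. w X * r X ^ i / a ^ Suc i) has_sum (\<Sum>i<N. infsum (\<lambda>X. w X * r X ^ i) W / a ^ Suc i)) W"
    proof (rule has_sum_sum_fin)
      fix i
      have "((\<lambda>X. w X * r X ^ i * (1 / a ^ Suc i)) has_sum (infsum (\<lambda>X. w X * r X ^ i) W * (1 / a ^ Suc i))) W"
        by (rule has_sum_cmult_left) (use abs_sm in auto)
      then show "((\<lambda>X. w X * r X ^ i / a ^ Suc i) has_sum infsum (\<lambda>X. w X * r X ^ i) W / a ^ Suc i) W"
        by simp
    qed simp
    have pt: "(\<Sum>i<N. w X * r X ^ i / a ^ Suc i) = w X / (a - r X) - e N X" if "X \<in> W" for X
    proof -
      have "(\<Sum>i<N. w X * r X ^ i / a ^ Suc i) = w X * (\<Sum>i<N. r X ^ i / a ^ Suc i)"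
        by (simp add: sum_distrib_left)
      also have "\<dots> = w X * ((1 - (r X / a) ^ N) / (a - r X))"
        using ar[OF that] a0 by (subst geom_part) auto
      finally show ?thesis by (simp add: e_def diff_divide_distrib right_diff_distrib)
    qed
    have h2: "((\<lambda>X. w X / (a - r X) - e N X) has_sum (G - infsum (e N) W)) W"
      unfolding G_def by (rule has_sum_diff_real) (use Gs es in auto)
    have "((\<lambda>X. \<Sum>i<N. w X * r X ^ i / a ^ Suc i) has_sum (G - infsum (e N) W)) W"
      using h2 by (rule has_sum_cong[THEN iffD1, rotated]) (use pt in auto)
    then show ?thesis using h has_sum_unique by blast
  qed
  have E0: "(\<lambda>N. infsum (e N) W) \<longlonglongrightarrow> 0"
  proof (rule Lim_null_comparison)
    have "norm (infsum (e N) W) \<le> infsum (t N) W" for N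
    proof -
      have "norm (infsum (e N) W) \<le> infsum (\<lambda>X. norm (e N X)) W"
        by (rule norm_infsum_bound) (use eabs in auto)
      also have "\<dots> \<le> infsum (t N) W"
        by (rule infsum_mono[OF eabs ts]) (use ele in auto)
      finally show ?thesis .
    qed
    then show "\<forall>\<^sub>F N in sequentially. norm (infsum (e N) W) \<le> infsum (t N) W" by simp
    show "(\<lambda>N. infsum (t N) W) \<longlonglongrightarrow> 0"
      unfolding t_def by (rule tail_zero[OF ws wn zt])
  qed
  have "(\<lambda>N. G - infsum (e N) W) \<longlonglongrightarrow> G - 0"
    by (intro tendsto_diff tendsto_const E0)
  then show ?thesis unfolding sums_def G_def[symmetric] part by simp
qed


lemma xv_range:
  assumes "b \<ge> 2" "X \<in> strs b d k"
  shows "0 \<le> real (strval b X) / real b ^ length X \<and> real (strval b X) / real b ^ length X < 1"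
proof -
  have "set X \<subseteq> {..<b}" using assms by (simp add: strs_def)
  then have "strval b X < b ^ length X" by (rule strval_lt)
  then have "real (strval b X) < real b ^ length X" by (metis of_nat_less_iff of_nat_power)
  moreover have "real b ^ length X > 0" using assms by simp
  ultimately show ?thesis by simp
qed

lemma per_n_U:
  assumes b2: "b \<ge> 2" "d < b" and n: "n > 0"
  shows "(\<lambda>i. (-1) ^ (Suc i) * (umom b d k' (Suc i) / real n ^ (Suc i + 1))) sums
     (infsum (\<lambda>X. wt b X / (real n + real (strval b X) / real b ^ length X)) (strs b d k') - real b / real n)"
proof -
  define W where "W = strs b d k'"
  define xv where "xv X = real (strval b X) / real b ^ length X" for X
  have xr: "X \<in> W \<Longrightarrow> 0 \<le> xv X \<and> xv X < 1" for X
    using xv_range[OF b2(1)] by (simp add: W_def xv_def)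
  have n1: "real n \<ge> 1" using n by simp
  have S: "(\<lambda>i. infsum (\<lambda>X. wt b X * (- xv X) ^ i) W / real n ^ Suc i) sums infsum (\<lambda>X. wt b X / (real n - - xv X)) W"
  proof (rule series_gen[OF wt_summable[OF b2, of k', folded W_def]])
    show "\<And>X. X \<in> W \<Longrightarrow> 0 \<le> wt b X" by (simp add: wt_def)
    show "0 < real n" using n by simp
    show "\<And>X. X \<in> W \<Longrightarrow> 1 \<le> real n - - xv X" using xr n1 by fastforce
    show "\<And>X. X \<in> W \<Longrightarrow> \<bar>- xv X\<bar> < real n" using xr n1 by fastforce
    show "\<And>X. X \<in> W \<Longrightarrow> \<bar>- xv X\<bar> \<le> 1" using xr by fastforce
  qed
  have um: "umom b d k' i = infsum (\<lambda>X. wt b X * xv X ^ i) W" for i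
    by (simp add: umom_def wt_def xv_def W_def)
  have e: "infsum (\<lambda>X. wt b X * (- xv X) ^ i) W = (-1) ^ i * umom b d k' i" for i
  proof -
    have "infsum (\<lambda>X. wt b X * (- xv X) ^ i) W = infsum (\<lambda>X. (-1) ^ i * (wt b X * xv X ^ i)) W"
      by (rule infsum_cong) (simp add: power_minus[of "xv _"])
    also have "\<dots> = (-1) ^ i * umom b d k' i" by (simp only: infsum_cmult_right' um)
    finally show ?thesis .
  qed
  define f where "f i = (-1) ^ i * umom b d k' i / real n ^ Suc i" for i
  have S2: "f sums infsum (\<lambda>X. wt b X / (real n + xv X)) W"
    using S unfolding e f_def by simp
  have u0: "umom b d k' 0 = real b"
    using um[of 0] wt_has_sum[OF b2, of k'] by (simp add: W_def infsumI)
  have "(\<lambda>i. f (Suc i)) sums (infsum (\<lambda>X. wt b X / (real n + xv X)) W - f 0)"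
    by (subst sums_Suc_iff) (use S2 in simp)
  moreover have "(\<lambda>i. f (Suc i)) = (\<lambda>i. (-1) ^ (Suc i) * (umom b d k' (Suc i) / real n ^ (Suc i + 1)))"
    by (rule ext) (simp add: f_def)
  moreover have "f 0 = real b / real n" by (simp add: f_def u0)
  ultimately show ?thesis by (simp add: W_def xv_def)
qed

lemma per_n_V:
  assumes b2: "b \<ge> 2" "d < b" and n: "n > 0"
  shows "(\<lambda>i. vmom b d k' (Suc i) / real (n + 1) ^ (Suc i + 1)) sums
     (infsum (\<lambda>X. wt b X / (real n + real (strval b X) / real b ^ length X)) (strs b d k') - real b / real (n + 1))"
proof -
  define W where "W = strs b d k'"
  define xv where "xv X = real (strval b X) / real b ^ length X" for X
  have xr: "X \<in> W \<Longrightarrow> 0 \<le> xv X \<and> xv X < 1" for X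
    using xv_range[OF b2(1)] by (simp add: W_def xv_def)
  have n1: "real n \<ge> 1" using n by simp
  have S: "(\<lambda>i. infsum (\<lambda>X. wt b X * (1 - xv X) ^ i) W / real (n + 1) ^ Suc i) sums infsum (\<lambda>X. wt b X / (real (n + 1) - (1 - xv X))) W"
  proof (rule series_gen[OF wt_summable[OF b2, of k', folded W_def]])
    show "\<And>X. X \<in> W \<Longrightarrow> 0 \<le> wt b X" by (simp add: wt_def)
    show "0 < real (n + 1)" using n by simp
    show "\<And>X. X \<in> W \<Longrightarrow> 1 \<le> real (n + 1) - (1 - xv X)" using xr n1 by fastforce
    show "\<And>X. X \<in> W \<Longrightarrow> \<bar>1 - xv X\<bar> < real (n + 1)" using xr n1 by fastforce
    show "\<And>X. X \<in> W \<Longrightarrow> \<bar>1 - xv X\<bar> \<le> 1" using xr by fastforce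
  qed
  have vm: "vmom b d k' i = infsum (\<lambda>X. wt b X * (1 - xv X) ^ i) W" for i
    by (simp add: vmom_def wt_def xv_def W_def)
  define f where "f i = vmom b d k' i / real (n + 1) ^ Suc i" for i
  have eq: "real (n + 1) - (1 - xv X) = real n + xv X" for X by simp
  have S2: "f sums infsum (\<lambda>X. wt b X / (real n + xv X)) W"
    using S unfolding vm[symmetric] f_def eq .
  have v0: "vmom b d k' 0 = real b"
    using vm[of 0] wt_has_sum[OF b2, of k'] by (simp add: W_def infsumI)
  have "(\<lambda>i. f (Suc i)) sums (infsum (\<lambda>X. wt b X / (real n + xv X)) W - f 0)"
    by (subst sums_Suc_iff) (use S2 in simp)
  moreover have "(\<lambda>i. f (Suc i)) = (\<lambda>i. vmom b d k' (Suc i) / real (n + 1) ^ (Suc i + 1))"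
    by (rule ext) (simp add: f_def)
  moreover have "f 0 = real b / real (n + 1)" by (simp add: f_def v0)
  ultimately show ?thesis by (simp add: W_def xv_def)
qed

lemma per_n_has_sum:
  assumes b2: "b \<ge> 2" "d < b" and n: "n > 0"
  shows "((\<lambda>X. 1 / real (n * b ^ length X + strval b X)) has_sum
     infsum (\<lambda>X. wt b X / (real n + real (strval b X) / real b ^ length X)) (strs b d k')) (strs b d k')"
proof -
  define xv where "xv X = real (strval b X) / real b ^ length X" for X
  have xr: "X \<in> strs b d k' \<Longrightarrow> 0 \<le> xv X \<and> xv X < 1" for X
    using xv_range[OF b2(1)] by (simp add: xv_def)
  have sm: "(\<lambda>X. wt b X / (real n + xv X)) summable_on strs b d k'"
  proof (rule summable_on_comparison_test[OF wt_summable[OF b2]])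
    fix X assume X: "X \<in> strs b d k'"
    have "1 \<le> real n + xv X" using n xr[OF X] by simp
    then show "wt b X / (real n + xv X) \<le> wt b X"
      using div_le_self_real[of "wt b X"] by (simp add: wt_def)
    show "0 \<le> wt b X / (real n + xv X)" using xr[OF X] by (simp add: wt_def)
  qed
  have pt: "1 / real (n * b ^ length X + strval b X) = wt b X / (real n + xv X)" for X
  proof -
    have bp: "real b ^ length X > 0" using b2 by simp
    have "real n + xv X = real (n * b ^ length X + strval b X) / real b ^ length X"
      using bp b2 by (simp add: xv_def add_divide_distrib)
    then show ?thesis using bp b2 by (simp add: wt_def power_one_over)
  qed
  show ?thesis unfolding pt xv_def[symmetric] using sm by simp
qed

theorem mainTheorem8:
  fixes b d k l :: nat
  assumes "b \<ge> 2" and "d < b" and "l \<ge> 1"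
  shows "(\<lambda>n. 1 / real n) summable_on {n. 0 < n \<and> dcount b d n = k}
    \<and> summable (\<lambda>m. (-1) ^ (Suc m) *
          (\<Sum>n\<in>{n. b ^ (l - 1) \<le> n \<and> n < b ^ l \<and> dcount b d n \<le> k}.
             umom b d (k - dcount b d n) (Suc m) / real n ^ (Suc m + 1)))
    \<and> Hk b d k =
        (\<Sum>n\<in>{n. 0 < n \<and> n < b ^ (l - 1) \<and> dcount b d n = k}. 1 / real n)
      + real b * (\<Sum>n\<in>{n. b ^ (l - 1) \<le> n \<and> n < b ^ l \<and> dcount b d n \<le> k}. 1 / real n)
      + (\<Sum>m. (-1) ^ (Suc m) *
          (\<Sum>n\<in>{n. b ^ (l - 1) \<le> n \<and> n < b ^ l \<and> dcount b d n \<le> k}.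
             umom b d (k - dcount b d n) (Suc m) / real n ^ (Suc m + 1)))
    \<and> summable (\<lambda>m.
          (\<Sum>n\<in>{n. b ^ (l - 1) \<le> n \<and> n < b ^ l \<and> dcount b d n \<le> k}.
             vmom b d (k - dcount b d n) (Suc m) / real (n + 1) ^ (Suc m + 1)))
    \<and> Hk b d k =
        (\<Sum>n\<in>{n. 0 < n \<and> n < b ^ (l - 1) \<and> dcount b d n = k}. 1 / real n)
      + real b * (\<Sum>n\<in>{n. b ^ (l - 1) \<le> n \<and> n < b ^ l \<and> dcount b d n \<le> k}. 1 / real (n + 1))
      + (\<Sum>m.
          (\<Sum>n\<in>{n. b ^ (l - 1) \<le> n \<and> n < b ^ l \<and> dcount b d n \<le> k}.
             vmom b d (k - dcount b d n) (Suc m) / real (n + 1) ^ (Suc m + 1)))"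
proof -
  note b2 = assms(1,2)
  define L where "L = l - 1"
  have lS: "b ^ Suc L = b ^ l" using assms(3) by (simp add: L_def)
  define M where "M = {n. b ^ (l - 1) \<le> n \<and> n < b ^ l \<and> dcount b d n \<le> k}"
  define A0 where "A0 = {n. 0 < n \<and> n < b ^ (l - 1) \<and> dcount b d n = k}"
  define A1 where "A1 = {n. b ^ L \<le> n \<and> dcount b d n = k}"
  define S where "S n = strs b d (k - dcount b d n)" for n
  define G where "G n = infsum (\<lambda>X. wt b X / (real n + real (strval b X) / real b ^ length X)) (S n)" for n
  have bL: "b ^ L \<ge> 1" using b2 by simp
  have Mfin: "finite M" unfolding M_def by (rule finite_subset[of _ "{..<b ^ l}"]) auto
  have A0fin: "finite A0" unfolding A0_def by (rule finite_subset[of _ "{..<b ^ (l - 1)}"]) auto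
  have Mpos: "n \<in> M \<Longrightarrow> 0 < n" for n using bL by (auto simp: M_def L_def)
  have sU: "(\<lambda>i. (-1) ^ (Suc i) * (\<Sum>n\<in>M. umom b d (k - dcount b d n) (Suc i) / real n ^ (Suc i + 1)))
      sums (\<Sum>n\<in>M. (G n - real b / real n))"
  proof -
    have "(\<lambda>i. \<Sum>n\<in>M. (-1) ^ (Suc i) * (umom b d (k - dcount b d n) (Suc i) / real n ^ (Suc i + 1)))
      sums (\<Sum>n\<in>M. (G n - real b / real n))"
      by (rule sums_sum) (use per_n_U[OF b2 Mpos] in \<open>simp add: G_def S_def\<close>)
    then show ?thesis by (simp add: sum_distrib_left)
  qed
  have sV: "(\<lambda>i. (\<Sum>n\<in>M. vmom b d (k - dcount b d n) (Suc i) / real (n + 1) ^ (Suc i + 1)))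
      sums (\<Sum>n\<in>M. (G n - real b / real (n + 1)))"
    by (rule sums_sum) (use per_n_V[OF b2 Mpos] in \<open>simp add: G_def S_def\<close>)
  define phi where "phi p = fst p * b ^ length (snd p) + strval b (snd p)" for p :: "nat \<times> nat list"
  have Msub: "M = {n. b ^ L \<le> n \<and> n < b ^ Suc L \<and> dcount b d n \<le> k}"
    unfolding M_def L_def lS[unfolded L_def] ..
  have HA1: "((\<lambda>n. 1 / real n) has_sum (\<Sum>n\<in>M. G n)) A1"
  proof -
    have P: "((\<lambda>p. 1 / real (phi p)) has_sum G n) (Pair n ` S n)" if "n \<in> M" for n
    proof -
      have "((\<lambda>X. 1 / real (n * b ^ length X + strval b X)) has_sum G n) (S n)"
        unfolding G_def S_def by (rule per_n_has_sum[OF b2 Mpos[OF that]])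
      then show ?thesis by (subst has_sum_reindex) (auto simp: inj_on_def phi_def comp_def)
    qed
    have Sig: "((\<lambda>p. 1 / real (phi p)) has_sum (\<Sum>n\<in>M. G n)) (\<Union>n\<in>M. Pair n ` S n)"
      by (rule sum_has_sum[OF Mfin P]) auto
    have SigE: "(\<Union>n\<in>M. Pair n ` S n) = Sigma M S" by auto
    have inj: "inj_on phi (Sigma M S)"
    proof (rule inj_onI)
      fix p q assume p: "p \<in> Sigma M S" and q: "q \<in> Sigma M S" and e: "phi p = phi q"
      obtain m X where pm: "p = (m, X)" by (cases p)
      obtain m' X' where qm: "q = (m', X')" by (cases q)
      have "m = m' \<and> X = X'"
        by (rule decomp_inj[OF b2(1), of L]) (use p q e pm qm in \<open>auto simp: Msub S_def strs_def phi_def\<close>)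
      then show "p = q" using pm qm by simp
    qed
    have img: "phi ` Sigma M S = A1"
    proof
      show "phi ` Sigma M S \<subseteq> A1"
      proof
        fix n assume "n \<in> phi ` Sigma M S"
        then obtain m X where mX: "m \<in> M" "X \<in> S m" "n = phi (m, X)" by auto
        have m0: "m > 0" using Mpos[OF mX(1)] .
        have Xs: "set X \<subseteq> {..<b}" "count_list X d = k - dcount b d m" using mX by (auto simp: S_def strs_def)
        have dc: "dcount b d n = k"
          using dcount_app[OF b2(1) m0 Xs(1), of d] Xs mX(1) mX(3) by (auto simp: phi_def M_def)
        have "m \<le> n" using mX(3) b2 by (simp add: phi_def trans_le_add1)
        then have "b ^ L \<le> n" using mX(1) Msub by auto
        then show "n \<in> A1" using dc by (simp add: A1_def)
      qed
      show "A1 \<subseteq> phi ` Sigma M S"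
      proof
        fix n assume n: "n \<in> A1"
        then obtain m X where mX: "b ^ L \<le> m" "m < b ^ Suc L" "set X \<subseteq> {..<b}" "n = m * b ^ length X + strval b X"
          using decomp_exists[OF b2(1), of L n] by (auto simp: A1_def)
        have m0: "m > 0" using mX bL by simp
        have dc: "dcount b d m + count_list X d = k"
          using dcount_app[OF b2(1) m0 mX(3), of d] mX(4) n by (simp add: A1_def)
        have "m \<in> M" using mX dc by (simp add: Msub)
        moreover have "X \<in> S m" using mX dc by (auto simp: S_def strs_def)
        ultimately show "n \<in> phi ` Sigma M S" using mX(4) by (force simp: phi_def)
      qed
    qed
    have "(((\<lambda>n. 1 / real n) \<circ> phi) has_sum (\<Sum>n\<in>M. G n)) (Sigma M S)"
      using Sig SigE by (simp add: comp_def)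
    then show ?thesis unfolding img[symmetric] by (subst has_sum_reindex[OF inj])
  qed
  have splitA: "{n. 0 < n \<and> dcount b d n = k} = A0 \<union> A1"
    using bL by (auto simp: A0_def A1_def L_def)
  have HA: "((\<lambda>n. 1 / real n) has_sum ((\<Sum>n\<in>A0. 1 / real n) + (\<Sum>n\<in>M. G n))) {n. 0 < n \<and> dcount b d n = k}"
    unfolding splitA
    by (rule has_sum_Un_disjoint[OF has_sum_finiteI[OF A0fin refl] HA1]) (auto simp: A0_def A1_def L_def)
  have Hk_eq: "Hk b d k = (\<Sum>n\<in>A0. 1 / real n) + (\<Sum>n\<in>M. G n)"
    unfolding Hk_def using HA by (rule infsumI)
  have sumU: "(\<Sum>n\<in>M. (G n - real b / real n)) = (\<Sum>n\<in>M. G n) - real b * (\<Sum>n\<in>M. 1 / real n)"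
    by (simp add: sum_subtractf sum_distrib_left)
  have sumV: "(\<Sum>n\<in>M. (G n - real b / real (n + 1))) = (\<Sum>n\<in>M. G n) - real b * (\<Sum>n\<in>M. 1 / real (n + 1))"
    by (simp add: sum_subtractf sum_distrib_left)
  show ?thesis
    unfolding M_def[symmetric] A0_def[symmetric]
    using HA sums_summable[OF sU] sums_summable[OF sV] sums_unique[OF sU] sums_unique[OF sV] Hk_eq sumU sumV
    by (auto simp: summable_on_def)
qed

end
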